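(* Let $(M,f,g)$ be an $(m,n)$-hypermodule over a commutative Krasner $(m,n)$-hyperring $(R,f',g')$ with scalar identity $1$, and let $Q$ be a proper subhypermodule of $M$. Let $S$ be a nonempty subset of $M\setminus\{0\}$ such that for all hyperideals $I_1,\dots,I_{n-1}$ of $R$ and all subhypermodules $N_1,N_2$ of $M$, if $f(N_1,g(I_i,1^{(n-2)},N_2),0^{(m-2)})\cap S\neq\varnothing$ for every $1\le i\le n-1$ then $f(N_1,g(I_1^{n-1},N_2),0^{(m-2)})\cap S\neq\varnothing$. If $Q$ is maximal (among subhypermodules of $M$) with respect to the property $Q\cap S=\varnothing$, then $Q$ is an $n$-ary classical prime subhypermodule of $M$.
   Context: A commutative Krasner $(m,n)$-hyperring with scalar identity $1$ is a triple $(R,f',g')$ where $(R,f')$ is a canonical $m$-ary hypergroup with zero $0$, $(R,g')$ is a commutative $n$-ary semigroup, $g'$ is distributive over $f'$, $0$ is a zero element for $g'$, and $g'(x,1^{(n-1)})=x$. Notation: $x_i^j$ denotes $x_i,\dots,x_j$ and $x^{(k)}$ denotes $x$ repeated $k$ times. A hyperideal $I$ of $R$ is a nonempty subset with $(I,f')$ an $m$-ary subhypergroup and $g'(x_1^{i-1},I,x_{i+1}^n)\subseteq I$. An $(m,n)$-hypermodule over $R$ is a triple $(M,f,g)$ with $(M,f)$ a canonical $m$-ary hypergroup with zero $0$ and $g:R^{n-1}\times M\to P^*(M)$ satisfying: $g(r_1^{n-1},f(x_1^m))=f(g(r_1^{n-1},x_1),\dots,g(r_1^{n-1},x_m))$;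 $g(r_1^{i-1},f'(s_1^m),r_{i+1}^{n-1},x)=f(g(r_1^{i-1},s_1,r_{i+1}^{n-1},x),\dots,g(r_1^{i-1},s_m,r_{i+1}^{n-1},x))$; $g(r_1^{i-1},g'(r_i^{i+n-1}),r_{i+n}^{2n-2},x)=g(r_1^{n-1},g(r_n^{2n-2},x))$; $g(r_1^{i-1},0,r_{i+1}^{n-1},x)=\{0\}$; moreover $g(1^{(n-1)},a)=\{a\}$. Operations applied to subsets mean unions over elements. A subhypermodule of $M$ is a nonempty $N\subseteq M$ with $(N,f)$ an $m$-ary subhypergroup and $g(R^{(n-1)},N)\subseteq N$. A proper subhypermodule $Q$ is $n$-ary classical prime if for all $r_1^{n-1}\in R$, $a\in M$, $g(r_1^{n-1},a)\subseteq Q$ implies $g(r_i,1^{(n-2)},a)\subseteq Q$ for some $1\le i\le n-1$. *)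

theory Defs
  imports Main "HOL-Library.Multiset"
begin

text \<open>Carriers are whole types. An m-ary hyperoperation is a map from lists
(used only at length m) to sets; an n-ary operation maps lists to elements.\<close>

definition sgl :: "'a list \<Rightarrow> 'a set list" where
  "sgl xs = map (\<lambda>x. {x}) xs"

definition hext :: "('a list \<Rightarrow> 'b set) \<Rightarrow> 'a set list \<Rightarrow> 'b set" where
  "hext f As = \<Union> {f xs | xs. list_all2 (\<lambda>x A. x \<in> A) xs As}"

definition hassoc :: "nat \<Rightarrow> ('a list \<Rightarrow> 'a set) \<Rightarrow> bool" where
  "hassoc m f \<longleftrightarrow> (\<forall>xs i j. length xs = 2*m - 1 \<and> i < m \<and> j < m \<longrightarrow>
     hext f (sgl (take i xs) @ [f (take m (drop i xs))] @ sgl (drop (i+m) xs)) =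
     hext f (sgl (take j xs) @ [f (take m (drop j xs))] @ sgl (drop (j+m) xs)))"

definition hcomm :: "nat \<Rightarrow> ('a list \<Rightarrow> 'b) \<Rightarrow> bool" where
  "hcomm m f \<longleftrightarrow> (\<forall>xs ys. length xs = m \<and> mset xs = mset ys \<longrightarrow> f xs = f ys)"

text \<open>m-ary subhypergroup: (K, f) is itself an m-ary hypergroup
(closure + reproductivity within K; associativity is inherited).\<close>
definition subhypergroup :: "nat \<Rightarrow> ('a list \<Rightarrow> 'a set) \<Rightarrow> 'a set \<Rightarrow> bool" where
  "subhypergroup m f K \<longleftrightarrow> K \<noteq> {} \<and>
     (\<forall>xs. length xs = m \<and> set xs \<subseteq> K \<longrightarrow> f xs \<subseteq> K) \<and>
     (\<forall>xs i. length xs = m - 1 \<and> set xs \<subseteq> K \<and> i \<le> m - 1 \<longrightarrow>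
        hext f (sgl (take i xs) @ [K] @ sgl (drop i xs)) = K)"

definition hinv :: "nat \<Rightarrow> ('a list \<Rightarrow> 'a set) \<Rightarrow> 'a \<Rightarrow> 'a \<Rightarrow> 'a" where
  "hinv m f e x = (THE y. e \<in> f (x # y # replicate (m-2) e))"

definition canonical_hypergroup :: "nat \<Rightarrow> ('a list \<Rightarrow> 'a set) \<Rightarrow> 'a \<Rightarrow> bool" where
  "canonical_hypergroup m f e \<longleftrightarrow> m \<ge> 2 \<and>
     (\<forall>xs. length xs = m \<longrightarrow> f xs \<noteq> {}) \<and>
     hassoc m f \<and>
     (\<forall>xs i. length xs = m - 1 \<and> i \<le> m - 1 \<longrightarrow>
        hext f (sgl (take i xs) @ [UNIV] @ sgl (drop i xs)) = UNIV) \<and>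
     hcomm m f \<and>
     (\<forall>x. f (x # replicate (m-1) e) = {x}) \<and>
     (\<forall>e'. (\<forall>x. f (x # replicate (m-1) e') = {x}) \<longrightarrow> e' = e) \<and>
     (\<forall>x. \<exists>!y. e \<in> f (x # y # replicate (m-2) e)) \<and>
     (\<forall>xs x i. length xs = m \<and> x \<in> f xs \<and> i < m \<longrightarrow>
        xs ! i \<in> f (map (hinv m f e) (rev (take i xs)) @ [x] @
                      map (hinv m f e) (rev (drop (Suc i) xs))))"

definition assoc_op :: "nat \<Rightarrow> ('a list \<Rightarrow> 'a) \<Rightarrow> bool" where
  "assoc_op n g \<longleftrightarrow> (\<forall>xs i j. length xs = 2*n - 1 \<and> i < n \<and> j < n \<longrightarrow>
     g (take i xs @ [g (take n (drop i xs))] @ drop (i+n) xs) =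
     g (take j xs @ [g (take n (drop j xs))] @ drop (j+n) xs))"

definition krasner_hyperring ::
  "nat \<Rightarrow> nat \<Rightarrow> ('r list \<Rightarrow> 'r set) \<Rightarrow> ('r list \<Rightarrow> 'r) \<Rightarrow> 'r \<Rightarrow> 'r \<Rightarrow> bool" where
  "krasner_hyperring m n f' g' z one \<longleftrightarrow>
     canonical_hypergroup m f' z \<and> n \<ge> 2 \<and> assoc_op n g' \<and> hcomm n g' \<and>
     (\<forall>xs ys i. length xs = n - 1 \<and> length ys = m \<and> i \<le> n - 1 \<longrightarrow>
        (\<lambda>y. g' (take i xs @ [y] @ drop i xs)) ` f' ys =
        f' (map (\<lambda>y. g' (take i xs @ [y] @ drop i xs)) ys)) \<and>
     (\<forall>xs i. length xs = n - 1 \<and> i \<le> n - 1 \<longrightarrow> g' (take i xs @ [z] @ drop i xs) = z) \<and>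
     (\<forall>x. g' (x # replicate (n-1) one) = x)"

definition hyperideal ::
  "nat \<Rightarrow> nat \<Rightarrow> ('r list \<Rightarrow> 'r set) \<Rightarrow> ('r list \<Rightarrow> 'r) \<Rightarrow> 'r set \<Rightarrow> bool" where
  "hyperideal m n f' g' I \<longleftrightarrow> subhypergroup m f' I \<and>
     (\<forall>xs i. length xs = n - 1 \<and> i \<le> n - 1 \<longrightarrow>
        (\<lambda>y. g' (take i xs @ [y] @ drop i xs)) ` I \<subseteq> I)"

definition gext :: "('r list \<Rightarrow> 'a \<Rightarrow> 'a set) \<Rightarrow> 'r set list \<Rightarrow> 'a set \<Rightarrow> 'a set" where
  "gext g Is N = \<Union> {g rs x | rs x. list_all2 (\<lambda>r I. r \<in> I) rs Is \<and> x \<in> N}"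

definition hypermodule ::
  "nat \<Rightarrow> nat \<Rightarrow> ('r list \<Rightarrow> 'r set) \<Rightarrow> ('r list \<Rightarrow> 'r) \<Rightarrow> 'r \<Rightarrow> 'r \<Rightarrow>
   ('a list \<Rightarrow> 'a set) \<Rightarrow> ('r list \<Rightarrow> 'a \<Rightarrow> 'a set) \<Rightarrow> 'a \<Rightarrow> bool" where
  "hypermodule m n f' g' z one f g zm \<longleftrightarrow>
     krasner_hyperring m n f' g' z one \<and> canonical_hypergroup m f zm \<and>
     (\<forall>rs x. length rs = n - 1 \<longrightarrow> g rs x \<noteq> {}) \<and>
     (\<forall>rs xs. length rs = n - 1 \<and> length xs = m \<longrightarrow>
        (\<Union>y\<in>f xs. g rs y) = hext f (map (g rs) xs)) \<and>
     (\<forall>rs ss i x. length rs = n - 2 \<and> length ss = m \<and> i \<le> n - 2 \<longrightarrow>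
        (\<Union>s\<in>f' ss. g (take i rs @ [s] @ drop i rs) x) =
        hext f (map (\<lambda>s. g (take i rs @ [s] @ drop i rs) x) ss)) \<and>
     (\<forall>rs i x. length rs = 2*n - 2 \<and> i < n - 1 \<longrightarrow>
        g (take i rs @ [g' (take n (drop i rs))] @ drop (i+n) rs) x =
        (\<Union>y\<in>g (drop (n-1) rs) x. g (take (n-1) rs) y)) \<and>
     (\<forall>rs i x. length rs = n - 2 \<and> i \<le> n - 2 \<longrightarrow>
        g (take i rs @ [z] @ drop i rs) x = {zm}) \<and>
     (\<forall>a. g (replicate (n-1) one) a = {a})"

definition subhypermodule ::
  "nat \<Rightarrow> nat \<Rightarrow> ('a list \<Rightarrow> 'a set) \<Rightarrow> ('r list \<Rightarrow> 'a \<Rightarrow> 'a set) \<Rightarrow> 'a set \<Rightarrow> bool" where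
  "subhypermodule m n f g N \<longleftrightarrow> subhypergroup m f N \<and>
     gext g (replicate (n-1) UNIV) N \<subseteq> N"

definition classical_prime ::
  "nat \<Rightarrow> nat \<Rightarrow> ('a list \<Rightarrow> 'a set) \<Rightarrow> ('r list \<Rightarrow> 'a \<Rightarrow> 'a set) \<Rightarrow> 'r \<Rightarrow> 'a set \<Rightarrow> bool" where
  "classical_prime m n f g one Q \<longleftrightarrow> subhypermodule m n f g Q \<and> Q \<noteq> UNIV \<and>
     (\<forall>rs a. length rs = n - 1 \<and> g rs a \<subseteq> Q \<longrightarrow>
        (\<exists>i < n - 1. g (rs ! i # replicate (n-2) one) a \<subseteq> Q))"

end

theory Submission
  imports Defs "HOL-Combinatorics.Permutations"
begin

lemma la2_sgl: "list_all2 (\<lambda>x A. x \<in> A) xs (sgl ys) \<longleftrightarrow> xs = ys"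
  unfolding sgl_def
  by (induction ys arbitrary: xs) (auto simp: list_all2_Cons2)

lemma hext_mem: "y \<in> hext F As \<longleftrightarrow> (\<exists>xs. list_all2 (\<lambda>x A. x \<in> A) xs As \<and> y \<in> F xs)"
  unfolding hext_def by auto

lemma hext_sgl: "hext F (sgl xs) = F xs"
  unfolding hext_def by (auto simp: la2_sgl)

lemma hext_mid: "y \<in> hext F (As @ [B] @ Cs) \<longleftrightarrow> (\<exists>as b cs. list_all2 (\<lambda>x A. x \<in> A) as As \<and> b \<in> B \<and> list_all2 (\<lambda>x A. x \<in> A) cs Cs \<and> y \<in> F (as @ [b] @ cs))"
proof
  assume "y \<in> hext F (As @ [B] @ Cs)"
  then obtain xs where xs: "list_all2 (\<lambda>x A. x \<in> A) xs (As @ [B] @ Cs)" "y \<in> F xs"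
    unfolding hext_mem by blast
  from xs(1) obtain us vs where uv: "xs = us @ vs" "list_all2 (\<lambda>x A. x \<in> A) us As"
      "list_all2 (\<lambda>x A. x \<in> A) vs ([B] @ Cs)"
    unfolding list_all2_append2 by blast
  from uv(3) obtain b cs where "vs = b # cs" "b \<in> B" "list_all2 (\<lambda>x A. x \<in> A) cs Cs"
    by (auto simp: list_all2_Cons2)
  then show "\<exists>as b cs. list_all2 (\<lambda>x A. x \<in> A) as As \<and> b \<in> B \<and> list_all2 (\<lambda>x A. x \<in> A) cs Cs \<and> y \<in> F (as @ [b] @ cs)"
    using uv xs(2) by auto
next
  assume "\<exists>as b cs. list_all2 (\<lambda>x A. x \<in> A) as As \<and> b \<in> B \<and> list_all2 (\<lambda>x A. x \<in> A) cs Cs \<and> y \<in> F (as @ [b] @ cs)"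
  then obtain as b cs where h: "list_all2 (\<lambda>x A. x \<in> A) as As" "b \<in> B" "list_all2 (\<lambda>x A. x \<in> A) cs Cs" "y \<in> F (as @ [b] @ cs)"
    by blast
  have "list_all2 (\<lambda>x A. x \<in> A) (as @ [b] @ cs) (As @ [B] @ Cs)"
    using h by (intro list_all2_appendI) auto
  then show "y \<in> hext F (As @ [B] @ Cs)" using h(4) unfolding hext_mem by blast
qed

lemma hext_mid2: "y \<in> hext F (As @ B # Cs) \<longleftrightarrow> (\<exists>as b cs. list_all2 (\<lambda>x A. x \<in> A) as As \<and> b \<in> B \<and> list_all2 (\<lambda>x A. x \<in> A) cs Cs \<and> y \<in> F (as @ b # cs))"
  using hext_mid[of y F As B Cs] by (simp only: append_Cons append_Nil)

lemma hext_mono: assumes AB: "list_all2 (\<subseteq>) As Bs" shows "hext F As \<subseteq> hext F Bs"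
proof
  fix y assume "y \<in> hext F As"
  then obtain xs where xs: "list_all2 (\<lambda>x A. x \<in> A) xs As" "y \<in> F xs" unfolding hext_mem by blast
  have "list_all2 (\<lambda>x A. x \<in> A) xs Bs"
    by (rule list_all2_trans[of "\<lambda>x A. x \<in> A" "(\<subseteq>)" "\<lambda>x A. x \<in> A", OF _ xs(1) AB]) blast
  then show "y \<in> hext F Bs" using xs(2) unfolding hext_mem by blast
qed

lemma hext_closed:
  assumes "\<And>xs. length xs = length As \<Longrightarrow> set xs \<subseteq> K \<Longrightarrow> F xs \<subseteq> K" "\<forall>A\<in>set As. A \<subseteq> K"
  shows "hext F As \<subseteq> K"
proof
  fix y assume "y \<in> hext F As"
  then obtain xs where xs: "list_all2 (\<lambda>x A. x \<in> A) xs As" "y \<in> F xs" by (auto simp: hext_mem)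
  have len: "length xs = length As" using xs(1) list_all2_lengthD by blast
  have "set xs \<subseteq> K"
  proof
    fix x assume "x \<in> set xs"
    then obtain j where j: "j < length xs" "x = xs ! j" by (auto simp: in_set_conv_nth)
    have "x \<in> As ! j" using xs(1) j by (simp add: list_all2_conv_all_nth)
    moreover have "As ! j \<in> set As" using j len by simp
    ultimately show "x \<in> K" using assms(2) by blast
  qed
  then show "y \<in> K" using assms(1)[of xs] xs list_all2_lengthD by blast
qed

lemma hext_perm_sub:
  assumes hc: "hcomm (length As) F" and ms: "mset As = mset Bs"
  shows "hext F As \<subseteq> hext F Bs"
proof
  fix y assume "y \<in> hext F As"
  then obtain xs where xs: "list_all2 (\<lambda>x A. x \<in> A) xs As" "y \<in> F xs" by (auto simp: hext_mem)
  obtain p where p: "p permutes {..<length As}" "permute_list p As = Bs"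
    using mset_eq_permutation[OF ms[symmetric]] by blast
  have len: "length xs = length As" using xs(1) list_all2_lengthD by blast
  define ys where "ys = permute_list p xs"
  have "list_all2 (\<lambda>x A. x \<in> A) ys Bs"
    unfolding list_all2_conv_all_nth
  proof (intro conjI allI impI)
    show "length ys = length Bs" using p(2) len ys_def by auto
    fix j assume "j < length ys"
    then have j: "j < length As" using ys_def len by simp
    have pj: "p j < length As" using permutes_in_image[OF p(1)] j by simp
    have "ys ! j = xs ! p j" unfolding ys_def using permute_list_nth[of p xs j] p(1) len j by simp
    moreover have "Bs ! j = As ! p j" using p(2)[symmetric] permute_list_nth[OF p(1) j] by simp
    moreover have "xs ! p j \<in> As ! p j" using xs(1) pj by (simp add: list_all2_conv_all_nth)
    ultimately show "ys ! j \<in> Bs ! j" by simp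
  qed
  moreover have "mset ys = mset xs" unfolding ys_def using p(1) len by simp
  then have "F ys = F xs" using hc len unfolding hcomm_def
    by (metis length_permute_list ys_def)
  ultimately show "y \<in> hext F Bs" using xs(2) by (auto simp: hext_mem)
qed

lemma hext_perm:
  assumes hc: "hcomm (length As) F" and ms: "mset As = mset Bs"
  shows "hext F As = hext F Bs"
proof -
  have "length As = length Bs" using ms mset_eq_length by blast
  then have hc2: "hcomm (length Bs) F" using hc by simp
  show ?thesis using hext_perm_sub[OF hc ms] hext_perm_sub[OF hc2 ms[symmetric]] by (rule subset_antisym)
qed

lemma hext_assoc_char:
  assumes "i + k \<le> length Ws"
  shows "y \<in> hext F (take i Ws @ [hext F (take k (drop i Ws))] @ drop (i+k) Ws) \<longleftrightarrow>
    (\<exists>xs. list_all2 (\<lambda>x A. x \<in> A) xs Ws \<and> y \<in> hext F (sgl (take i xs) @ [F (take k (drop i xs))] @ sgl (drop (i+k) xs)))"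
proof
  assume "y \<in> hext F (take i Ws @ [hext F (take k (drop i Ws))] @ drop (i+k) Ws)"
  then obtain as b cs where h: "list_all2 (\<lambda>x A. x \<in> A) as (take i Ws)" "b \<in> hext F (take k (drop i Ws))"
    "list_all2 (\<lambda>x A. x \<in> A) cs (drop (i+k) Ws)" "y \<in> F (as @ [b] @ cs)"
    unfolding hext_mid by blast
  obtain bs where bs: "list_all2 (\<lambda>x A. x \<in> A) bs (take k (drop i Ws))" "b \<in> F bs"
    using h(2) by (auto simp: hext_mem)
  have la: "length as = i" "length bs = k" using h(1) bs(1) assms list_all2_lengthD by fastforce+
  have "Ws = take i Ws @ take k (drop i Ws) @ drop (i+k) Ws"
    by (metis append_take_drop_id drop_drop add.commute)
  then have L: "list_all2 (\<lambda>x A. x \<in> A) (as @ bs @ cs) Ws"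
    using h(1,3) bs(1) by (metis list_all2_appendI)
  have "y \<in> hext F (sgl (take i (as @ bs @ cs)) @ [F (take k (drop i (as @ bs @ cs)))] @ sgl (drop (i+k) (as @ bs @ cs)))"
    using la h(4) bs(2) unfolding hext_mid la2_sgl by auto
  then show "\<exists>xs. list_all2 (\<lambda>x A. x \<in> A) xs Ws \<and> y \<in> hext F (sgl (take i xs) @ [F (take k (drop i xs))] @ sgl (drop (i+k) xs))"
    using L by blast
next
  assume "\<exists>xs. list_all2 (\<lambda>x A. x \<in> A) xs Ws \<and> y \<in> hext F (sgl (take i xs) @ [F (take k (drop i xs))] @ sgl (drop (i+k) xs))"
  then obtain xs where xs: "list_all2 (\<lambda>x A. x \<in> A) xs Ws" "y \<in> hext F (sgl (take i xs) @ [F (take k (drop i xs))] @ sgl (drop (i+k) xs))"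
    by blast
  obtain b where b: "b \<in> F (take k (drop i xs))" "y \<in> F (take i xs @ [b] @ drop (i+k) xs)"
    using xs(2) unfolding hext_mid la2_sgl by auto
  have "b \<in> hext F (take k (drop i Ws))"
    using b(1) xs(1) by (auto simp: hext_mem intro!: list_all2_takeI list_all2_dropI)
  then show "y \<in> hext F (take i Ws @ [hext F (take k (drop i Ws))] @ drop (i+k) Ws)"
    using b(2) xs(1) unfolding hext_mid by (meson list_all2_takeI list_all2_dropI)
qed

lemma hext_assoc:
  assumes "hassoc m F" "length Ws = 2*m - 1" "i < m" "j < m"
  shows "hext F (take i Ws @ [hext F (take m (drop i Ws))] @ drop (i+m) Ws) =
         hext F (take j Ws @ [hext F (take m (drop j Ws))] @ drop (j+m) Ws)"
proof -
  have ij: "i + m \<le> length Ws" "j + m \<le> length Ws" using assms by auto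
  have L: "\<And>xs. list_all2 (\<lambda>x A. x \<in> A) xs Ws \<Longrightarrow> length xs = 2*m-1" using assms(2) list_all2_lengthD by metis
  have E: "\<And>xs. length xs = 2*m-1 \<Longrightarrow> hext F (sgl (take i xs) @ [F (take m (drop i xs))] @ sgl (drop (i+m) xs)) = hext F (sgl (take j xs) @ [F (take m (drop j xs))] @ sgl (drop (j+m) xs))"
    using assms(1,3,4) unfolding hassoc_def by blast
  show ?thesis
  proof (rule set_eqI)
    fix y
    show "y \<in> hext F (take i Ws @ [hext F (take m (drop i Ws))] @ drop (i+m) Ws) \<longleftrightarrow> y \<in> hext F (take j Ws @ [hext F (take m (drop j Ws))] @ drop (j+m) Ws)"
      unfolding hext_assoc_char[OF ij(1)] hext_assoc_char[OF ij(2)] using L E by blast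
  qed
qed

lemma la2_rep: "list_all2 (\<lambda>x A. x \<in> A) xs (replicate k {c}) \<longleftrightarrow> xs = replicate k c"
  by (induction k arbitrary: xs) (auto simp: list_all2_Cons2)

lemma hinv_eq:
  assumes CH: "canonical_hypergroup m F e" and h: "e \<in> F (x # y # replicate (m-2) e)"
  shows "hinv m F e x = y"
proof -
  have "\<exists>!y. e \<in> F (x # y # replicate (m-2) e)" using CH unfolding canonical_hypergroup_def by blast
  then show ?thesis unfolding hinv_def using h by (rule the1_equality)
qed

lemma hinv_prop:
  assumes CH: "canonical_hypergroup m F e"
  shows "e \<in> F (x # hinv m F e x # replicate (m-2) e)"
proof -
  have "\<exists>!y. e \<in> F (x # y # replicate (m-2) e)" using CH unfolding canonical_hypergroup_def by blast
  then show ?thesis unfolding hinv_def by (rule theI')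
qed

lemma canon_sub:
  assumes CH: "canonical_hypergroup m F e" and ne: "K \<noteq> {}"
    and cl: "\<And>xs. length xs = m \<Longrightarrow> set xs \<subseteq> K \<Longrightarrow> F xs \<subseteq> K"
    and inv: "\<And>x. x \<in> K \<Longrightarrow> hinv m F e x \<in> K"
  shows "subhypergroup m F K"
  unfolding subhypergroup_def
proof (intro conjI allI impI)
  show "K \<noteq> {}" by (rule ne)
  show "F xs \<subseteq> K" if "length xs = m \<and> set xs \<subseteq> K" for xs using that cl by blast
  fix xs i assume h: "length xs = m - 1 \<and> set xs \<subseteq> K \<and> i \<le> m - 1"
  have m2: "m \<ge> 2" using CH unfolding canonical_hypergroup_def by blast
  have ilen: "length (take i xs) = i" using h by simp
  show "hext F (sgl (take i xs) @ [K] @ sgl (drop i xs)) = K"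
  proof
    show "hext F (sgl (take i xs) @ [K] @ sgl (drop i xs)) \<subseteq> K"
    proof
      fix y assume "y \<in> hext F (sgl (take i xs) @ [K] @ sgl (drop i xs))"
      then obtain k where k: "k \<in> K" "y \<in> F (take i xs @ [k] @ drop i xs)"
        unfolding hext_mid la2_sgl by blast
      have "set (take i xs @ [k] @ drop i xs) \<subseteq> K" using h k(1)
        by (auto dest: in_set_takeD in_set_dropD)
      moreover have "length (take i xs @ [k] @ drop i xs) = m" using h m2 by auto
      ultimately show "y \<in> K" using cl k(2) by blast
    qed
  next
    show "K \<subseteq> hext F (sgl (take i xs) @ [K] @ sgl (drop i xs))"
    proof
      fix y assume yK: "y \<in> K"
      have "hext F (sgl (take i xs) @ [UNIV] @ sgl (drop i xs)) = UNIV"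
        using CH h unfolding canonical_hypergroup_def by blast
      then have "y \<in> hext F (sgl (take i xs) @ [UNIV] @ sgl (drop i xs))" by simp
      then obtain k where k: "y \<in> F (take i xs @ [k] @ drop i xs)"
        unfolding hext_mid la2_sgl by blast
      define L where "L = take i xs @ [k] @ drop i xs"
      have lenL: "length L = m" unfolding L_def using h m2 by auto
      have im: "i < m" using h m2 by auto
      have rev: "\<forall>xs x i. length xs = m \<and> x \<in> F xs \<and> i < m \<longrightarrow>
        xs ! i \<in> F (map (hinv m F e) (rev (take i xs)) @ [x] @ map (hinv m F e) (rev (drop (Suc i) xs)))"
        using CH unfolding canonical_hypergroup_def by blast
      have "L ! i \<in> F (map (hinv m F e) (rev (take i L)) @ [y] @ map (hinv m F e) (rev (drop (Suc i) L)))"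
        using rev lenL k im unfolding L_def by blast
      moreover have "L ! i = k" "take i L = take i xs" "drop (Suc i) L = drop i xs"
        unfolding L_def using ilen by (auto simp: nth_append)
      ultimately have kin: "k \<in> F (map (hinv m F e) (rev (take i xs)) @ [y] @ map (hinv m F e) (rev (drop i xs)))"
        by simp
      have "set (map (hinv m F e) (rev (take i xs)) @ [y] @ map (hinv m F e) (rev (drop i xs))) \<subseteq> K"
        using h yK inv by (auto dest: in_set_takeD in_set_dropD)
      moreover have "length (map (hinv m F e) (rev (take i xs)) @ [y] @ map (hinv m F e) (rev (drop i xs))) = m"
        using h m2 by auto
      ultimately have "k \<in> K" using cl kin by blast
      then show "y \<in> hext F (sgl (take i xs) @ [K] @ sgl (drop i xs))"
        unfolding hext_mid la2_sgl using k by blast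
    qed
  qed
qed

locale HM =
  fixes m n :: nat and f' :: "'r list \<Rightarrow> 'r set" and g' :: "'r list \<Rightarrow> 'r" and z one :: 'r
    and f :: "'a list \<Rightarrow> 'a set" and g :: "'r list \<Rightarrow> 'a \<Rightarrow> 'a set" and zm :: 'a
  assumes hm: "hypermodule m n f' g' z one f g zm"
begin

lemma KR: "krasner_hyperring m n f' g' z one" using hm unfolding hypermodule_def by (elim conjE)
lemma CR: "canonical_hypergroup m f' z" using KR unfolding krasner_hyperring_def by (elim conjE)
lemma CM: "canonical_hypergroup m f zm" using hm unfolding hypermodule_def by (elim conjE)
lemma m2: "m \<ge> 2" using CM unfolding canonical_hypergroup_def by (elim conjE)
lemma n2: "n \<ge> 2" using KR unfolding krasner_hyperring_def by (elim conjE)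
lemma gcomm: "hcomm n g'" using KR unfolding krasner_hyperring_def by (elim conjE)
lemma fcomm: "hcomm m f" using CM unfolding canonical_hypergroup_def by (elim conjE)
lemma fassoc: "hassoc m f" using CM unfolding canonical_hypergroup_def by (elim conjE)
lemma fzero_all: "\<forall>x. f (x # replicate (m-1) zm) = {x}" using CM unfolding canonical_hypergroup_def by (elim conjE)
lemma fzero: "f (x # replicate (m-1) zm) = {x}" using fzero_all by (rule spec)
lemma distr'_all: "\<forall>xs ys i. length xs = n - 1 \<and> length ys = m \<and> i \<le> n - 1 \<longrightarrow>
        (\<lambda>y. g' (take i xs @ [y] @ drop i xs)) ` f' ys =
        f' (map (\<lambda>y. g' (take i xs @ [y] @ drop i xs)) ys)"
  using KR unfolding krasner_hyperring_def by (elim conjE)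
lemma distr': "length xs = n - 1 \<Longrightarrow> length ys = m \<Longrightarrow> i \<le> n - 1 \<Longrightarrow>
        (\<lambda>y. g' (take i xs @ [y] @ drop i xs)) ` f' ys =
        f' (map (\<lambda>y. g' (take i xs @ [y] @ drop i xs)) ys)"
  using distr'_all by simp
lemma zero'_all: "\<forall>xs i. length xs = n - 1 \<and> i \<le> n - 1 \<longrightarrow> g' (take i xs @ [z] @ drop i xs) = z"
  using KR unfolding krasner_hyperring_def by (elim conjE)
lemma zero': "length xs = n - 1 \<Longrightarrow> i \<le> n - 1 \<Longrightarrow> g' (take i xs @ [z] @ drop i xs) = z"
  using zero'_all by simp
lemma ident'_all: "\<forall>x. g' (x # replicate (n-1) one) = x"
  using KR unfolding krasner_hyperring_def by (elim conjE)
lemma ident': "g' (x # replicate (n-1) one) = x"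
  using ident'_all by (rule spec)
lemma Mdist_all: "\<forall>rs xs. length rs = n - 1 \<and> length xs = m \<longrightarrow>
        (\<Union>y\<in>f xs. g rs y) = hext f (map (g rs) xs)"
  using hm unfolding hypermodule_def by (elim conjE)
lemma Mdist: "length rs = n - 1 \<Longrightarrow> length xs = m \<Longrightarrow>
        (\<Union>y\<in>f xs. g rs y) = hext f (map (g rs) xs)"
  using Mdist_all by simp
lemma Rdist_all: "\<forall>rs ss i x. length rs = n - 2 \<and> length ss = m \<and> i \<le> n - 2 \<longrightarrow>
        (\<Union>s\<in>f' ss. g (take i rs @ [s] @ drop i rs) x) =
        hext f (map (\<lambda>s. g (take i rs @ [s] @ drop i rs) x) ss)"
  using hm unfolding hypermodule_def by (elim conjE)
lemma Rdist: "length rs = n - 2 \<Longrightarrow> length ss = m \<Longrightarrow> i \<le> n - 2 \<Longrightarrow>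
        (\<Union>s\<in>f' ss. g (take i rs @ [s] @ drop i rs) x) =
        hext f (map (\<lambda>s. g (take i rs @ [s] @ drop i rs) x) ss)"
  using Rdist_all by simp
lemma Massoc_all: "\<forall>rs i x. length rs = 2*n - 2 \<and> i < n - 1 \<longrightarrow>
        g (take i rs @ [g' (take n (drop i rs))] @ drop (i+n) rs) x =
        (\<Union>y\<in>g (drop (n-1) rs) x. g (take (n-1) rs) y)"
  using hm unfolding hypermodule_def by (elim conjE)
lemma Massoc: "length rs = 2*n - 2 \<Longrightarrow> i < n - 1 \<Longrightarrow>
        g (take i rs @ [g' (take n (drop i rs))] @ drop (i+n) rs) x =
        (\<Union>y\<in>g (drop (n-1) rs) x. g (take (n-1) rs) y)"
  using Massoc_all by blast
lemma Mzero_all: "\<forall>rs i x. length rs = n - 2 \<and> i \<le> n - 2 \<longrightarrow> g (take i rs @ [z] @ drop i rs) x = {zm}"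
  using hm unfolding hypermodule_def by (elim conjE)
lemma Mzero: "length rs = n - 2 \<Longrightarrow> i \<le> n - 2 \<Longrightarrow> g (take i rs @ [z] @ drop i rs) x = {zm}"
  using Mzero_all by blast
lemma Mone_all: "\<forall>a. g (replicate (n-1) one) a = {a}"
  using hm unfolding hypermodule_def by (elim conjE)
lemma Mone: "g (replicate (n-1) one) a = {a}"
  using Mone_all by (rule spec)

definition ones :: "'r list" where "ones = replicate (n-2) one"
definition act :: "'r \<Rightarrow> 'a \<Rightarrow> 'a set" where "act s x = g (s # ones) x"
definition actS :: "'r \<Rightarrow> 'a set \<Rightarrow> 'a set" where "actS s X = (\<Union>x\<in>X. act s x)"
definition mul :: "'r \<Rightarrow> 'r \<Rightarrow> 'r" where "mul s t = g' (s # ones @ [t])"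
definition Rset :: "'a set \<Rightarrow> 'a set" where "Rset X = {y. \<exists>t. \<exists>x\<in>X. y \<in> act t x}"

lemma len_ones[simp]: "length ones = n - 2" unfolding ones_def by simp
lemma cons_ones: "s # ones = s # replicate (n-2) one" unfolding ones_def by simp
lemma n_form: "n = Suc (Suc (n-2))" using n2 by simp
lemma one_ones: "one # ones = replicate (n-1) one"
proof -
  have "n - 1 = Suc (n-2)" using n2 by simp
  then show ?thesis unfolding ones_def by simp
qed
lemma take_ones: "take n (s # ones @ L) = s # ones @ take 1 L"
proof -
  have "take (Suc (Suc (n-2))) (s # ones @ L) = s # ones @ take 1 L"
    unfolding ones_def by (simp add: take_append)
  then show ?thesis using n_form by simp
qed
lemma drop_ones: "drop n (s # ones @ L) = drop 1 L"
proof -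
  have "drop (Suc (Suc (n-2))) (s # ones @ L) = drop 1 L"
    unfolding ones_def by (simp add: drop_append)
  then show ?thesis using n_form by simp
qed
lemma take_ones1: "take (n-1) (s # ones @ L) = s # ones"
proof -
  have "take (Suc (n-2)) (s # ones @ L) = s # ones"
    unfolding ones_def by simp
  moreover have "n - 1 = Suc (n-2)" using n2 by simp
  ultimately show ?thesis by simp
qed
lemma drop_ones1: "drop (n-1) (s # ones @ L) = L"
proof -
  have "drop (Suc (n-2)) (s # ones @ L) = L"
    unfolding ones_def by simp
  moreover have "n - 1 = Suc (n-2)" using n2 by simp
  ultimately show ?thesis by simp
qed
lemma ones_one: "ones @ [one] = replicate (n-1) one"
  using n2 unfolding ones_def by (metis one_ones ones_def replicate_append_same)

lemma act_one: "act one x = {x}"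
  unfolding act_def one_ones by (rule Mone)

lemma act_z: "act z x = {zm}"
  unfolding act_def using Mzero[of ones 0 x] by simp

lemma act_mul: "act (mul s t) x = actS s (act t x)"
proof -
  define RS where "RS = (s # ones) @ (t # ones)"
  have len: "length RS = 2*n - 2" unfolding RS_def using n2 by simp
  have n1: "0 < n - 1" using n2 by simp
  have e1: "take n (drop 0 RS) = s # ones @ [t]" unfolding RS_def using take_ones[of s "t # ones"] by simp
  have e2: "drop (0+n) RS = ones" unfolding RS_def using drop_ones[of s "t # ones"] by simp
  have e3: "drop (n-1) RS = t # ones" "take (n-1) RS = s # ones" unfolding RS_def
    using drop_ones1[of s "t # ones"] take_ones1[of s "t # ones"] by simp_all
  show ?thesis using Massoc[OF len n1, of x] unfolding e1 e2 e3
    by (simp add: act_def actS_def mul_def)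
qed

lemma mul_comm: "mul s t = mul t s"
proof -
  have "length (s # ones @ [t]) = n" using n2 by simp
  moreover have "mset (s # ones @ [t]) = mset (t # ones @ [s])" by simp
  moreover have H: "\<forall>xs ys. length xs = n \<and> mset xs = mset ys \<longrightarrow> g' xs = g' ys" using gcomm unfolding hcomm_def .
  ultimately show ?thesis unfolding mul_def by blast
qed

lemma act_comm: "actS s (act t x) = actS t (act s x)"
proof -
  have "actS s (act t x) = act (mul s t) x" by (rule act_mul[symmetric])
  also have "\<dots> = act (mul t s) x" by (simp only: mul_comm[of s t])
  also have "\<dots> = actS t (act s x)" by (rule act_mul)
  finally show ?thesis .
qed

lemma actS_UN: "actS s (\<Union>x\<in>X. B x) = (\<Union>x\<in>X. actS s (B x))"
  unfolding actS_def by blast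

lemma actS_comm: "actS s (actS t X) = actS t (actS s X)"
proof -
  have "actS s (actS t X) = (\<Union>x\<in>X. actS s (act t x))" unfolding actS_def[of t] actS_UN ..
  also have "\<dots> = (\<Union>x\<in>X. actS t (act s x))" using act_comm by simp
  also have "\<dots> = actS t (actS s X)" unfolding actS_def[of s X] actS_UN ..
  finally show ?thesis .
qed

lemma g_act: "length rs = n - 1 \<Longrightarrow> g rs x = act (g' (rs @ [one])) x"
proof -
  assume lr: "length rs = n - 1"
  define RS where "RS = rs @ [one] @ ones"
  have len: "length RS = 2*n - 2" unfolding RS_def using n2 lr by simp
  have n1: "0 < n - 1" using n2 by simp
  have e1: "take n (drop 0 RS) = rs @ [one]" unfolding RS_def using n2 lr by simp
  have e2: "drop (0+n) RS = ones" unfolding RS_def using n2 lr by simp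
  have e3: "drop (n-1) RS = one # ones" "take (n-1) RS = rs" unfolding RS_def using n2 lr by simp_all
  show ?thesis using Massoc[OF len n1, of x] unfolding e1 e2 e3 one_ones Mone
    by (simp add: act_def)
qed

lemma g_cons: "length us = n - 2 \<Longrightarrow> g (u # us) x = actS u (g (one # us) x)"
proof -
  assume lr: "length us = n - 2"
  define RS where "RS = (u # ones) @ (one # us)"
  have len: "length RS = 2*n - 2" unfolding RS_def using n2 lr by simp
  have n1: "0 < n - 1" using n2 by simp
  have e1: "take n (drop 0 RS) = u # replicate (n-1) one" unfolding RS_def using take_ones[of u "one # us"] ones_one by simp
  have e2: "drop (0+n) RS = us" unfolding RS_def using drop_ones[of u "one # us"] by simp
  have e3: "drop (n-1) RS = one # us" "take (n-1) RS = u # ones" unfolding RS_def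
    using drop_ones1[of u "one # us"] take_ones1[of u "one # us"] by simp_all
  show ?thesis using Massoc[OF len n1, of x] unfolding e1 e2 e3 ident'
    by (simp add: act_def actS_def)
qed

lemma g_perm: "length rs = n - 1 \<Longrightarrow> mset rs = mset rs' \<Longrightarrow> g rs x = g rs' x"
proof -
  assume l: "length rs = n - 1" and ms: "mset rs = mset rs'"
  have l': "length rs' = n - 1" using l ms mset_eq_length by metis
  have a1: "length (rs @ [one]) = n" using l n2 by simp
  have a2: "mset (rs @ [one]) = mset (rs' @ [one])" using ms by simp
  have H: "\<forall>xs ys. length xs = n \<and> mset xs = mset ys \<longrightarrow> g' xs = g' ys" using gcomm unfolding hcomm_def .
  have "g' (rs @ [one]) = g' (rs' @ [one])" using H a1 a2 by blast
  then show ?thesis using g_act[OF l] g_act[OF l'] by simp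
qed

lemma g_fold_gen: "length vs \<le> n - 1 \<Longrightarrow> g (vs @ replicate (n - 1 - length vs) one) x = foldr actS vs {x}"
proof (induction vs)
  case Nil
  then show ?case using Mone by simp
next
  case (Cons v vs)
  define k where "k = n - 1 - Suc (length vs)"
  have k1: "n - 1 - length vs = Suc k" unfolding k_def using Cons.prems by simp
  have k2: "n - 1 - length (v # vs) = k" unfolding k_def by simp
  have l: "length (vs @ replicate k one) = n - 2" unfolding k_def using Cons.prems by simp
  have IH: "g (vs @ replicate (Suc k) one) x = foldr actS vs {x}" using Cons.IH Cons.prems k1 by simp
  have "g ((v # vs) @ replicate k one) x = g (v # (vs @ replicate k one)) x" by simp
  also have "\<dots> = actS v (g (one # vs @ replicate k one) x)" by (rule g_cons[OF l])
  also have "g (one # vs @ replicate k one) x = g (vs @ replicate (Suc k) one) x"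
  proof (rule g_perm)
    show "length (one # vs @ replicate k one) = n - 1" using l n2 by simp
    show "mset (one # vs @ replicate k one) = mset (vs @ replicate (Suc k) one)"
      by simp
  qed
  also note IH
  finally show ?case unfolding k2 by simp
qed

lemma g_fold: "length us = n - 1 \<Longrightarrow> g us x = foldr actS us {x}"
  using g_fold_gen[of us x] by simp

end

context HM
begin

lemma actS_mono: "X \<subseteq> Y \<Longrightarrow> actS s X \<subseteq> actS s Y"
  unfolding actS_def by blast

lemma actS_single: "actS s {x} = act s x" unfolding actS_def by simp

lemma Rset_mono: "X \<subseteq> Y \<Longrightarrow> Rset X \<subseteq> Rset Y"
  unfolding Rset_def by blast

lemma Rset_incl: "X \<subseteq> Rset X"
proof
  fix x assume "x \<in> X" then show "x \<in> Rset X" unfolding Rset_def using act_one by blast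
qed

lemma act_in_Rset: "x \<in> X \<Longrightarrow> act t x \<subseteq> Rset X"
  unfolding Rset_def by blast

lemma actS_in_Rset: "actS t X \<subseteq> Rset X"
  unfolding Rset_def actS_def by blast

lemma Rset_Rset: "Rset (Rset X) \<subseteq> Rset X"
proof
  fix y assume "y \<in> Rset (Rset X)"
  then obtain t w where tw: "w \<in> Rset X" "y \<in> act t w" unfolding Rset_def by blast
  then obtain s x where sx: "x \<in> X" "w \<in> act s x" unfolding Rset_def by blast
  have "y \<in> actS t (act s x)" using tw sx unfolding actS_def by blast
  then have "y \<in> act (mul t s) x" using act_mul by simp
  then show "y \<in> Rset X" using sx unfolding Rset_def by blast
qed

lemma Rset_actS: "actS r (Rset X) = Rset (actS r X)"
proof
  show "actS r (Rset X) \<subseteq> Rset (actS r X)"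
  proof
    fix y assume "y \<in> actS r (Rset X)"
    then obtain w t x where h: "x \<in> X" "w \<in> act t x" "y \<in> act r w" unfolding actS_def Rset_def by blast
    then have "y \<in> actS r (act t x)" unfolding actS_def by blast
    then have "y \<in> actS t (act r x)" using act_comm by simp
    then obtain v where "v \<in> act r x" "y \<in> act t v" unfolding actS_def by blast
    then show "y \<in> Rset (actS r X)" using h(1) unfolding Rset_def actS_def by blast
  qed
next
  show "Rset (actS r X) \<subseteq> actS r (Rset X)"
  proof
    fix y assume "y \<in> Rset (actS r X)"
    then obtain t w x where h: "x \<in> X" "w \<in> act r x" "y \<in> act t w" unfolding actS_def Rset_def by blast
    then have "y \<in> actS t (act r x)" unfolding actS_def by blast
    then have "y \<in> actS r (act t x)" using act_comm by simp
    then obtain v where "v \<in> act t x" "y \<in> act r v" unfolding actS_def by blast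
    then show "y \<in> actS r (Rset X)" using h(1) unfolding Rset_def actS_def by blast
  qed
qed

lemma foldr_mono: "X \<subseteq> Y \<Longrightarrow> foldr actS rs X \<subseteq> foldr actS rs Y"
  by (induction rs) (auto simp: actS_mono)

lemma Rset_foldr: "foldr actS rs (Rset X) = Rset (foldr actS rs X)"
  by (induction rs) (auto simp: Rset_actS)

lemma act_zm: "act r zm = {zm}"
proof -
  have "mul r z = z" unfolding mul_def using zero'[of "r # ones" "n-1"] n2
    by (simp add: take_ones1 drop_ones1)
  then have "act z zm = actS r (act z zm)" using act_mul[of r z zm] by simp
  then show ?thesis using act_z actS_single by simp
qed

end

context HM
begin

definition Fcl :: "'a set \<Rightarrow> bool" where
  "Fcl K \<longleftrightarrow> (\<forall>xs. length xs = m \<and> set xs \<subseteq> K \<longrightarrow> f xs \<subseteq> K)"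

definition sm :: "'a set \<Rightarrow> 'a set \<Rightarrow> 'a set" where
  "sm A B = hext f (A # B # replicate (m-2) {zm})"

lemma m_form: "m = Suc (Suc (m-2))" using m2 by simp

lemma hext_Fcl: "Fcl K \<Longrightarrow> length As = m \<Longrightarrow> \<forall>A\<in>set As. A \<subseteq> K \<Longrightarrow> hext f As \<subseteq> K"
  unfolding Fcl_def by (rule hext_closed) auto

lemma F_zeros: "hext f (A # replicate (m-1) {zm}) = A"
proof
  show "hext f (A # replicate (m-1) {zm}) \<subseteq> A"
  proof
    fix y assume "y \<in> hext f (A # replicate (m-1) {zm})"
    then obtain ws where ws: "list_all2 (\<lambda>x A. x \<in> A) ws (A # replicate (m-1) {zm})" "y \<in> f ws"
      unfolding hext_mem by blast
    then obtain x ws' where "ws = x # ws'" "x \<in> A" "list_all2 (\<lambda>x A. x \<in> A) ws' (replicate (m-1) {zm})"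
      by (auto simp: list_all2_Cons2)
    then have "ws = x # replicate (m-1) zm" "x \<in> A" by (auto simp: la2_rep)
    then show "y \<in> A" using ws(2) fzero by simp
  qed
next
  show "A \<subseteq> hext f (A # replicate (m-1) {zm})"
  proof
    fix x assume x: "x \<in> A"
    have "list_all2 (\<lambda>x A. x \<in> A) (x # replicate (m-1) zm) (A # replicate (m-1) {zm})"
      using x by (simp add: la2_rep)
    moreover have "x \<in> f (x # replicate (m-1) zm)" using fzero by simp
    ultimately show "x \<in> hext f (A # replicate (m-1) {zm})" unfolding hext_mem by blast
  qed
qed

lemma sm_comm: "sm A B = sm B A"
  unfolding sm_def
proof (rule hext_perm)
  have "length (A # B # replicate (m - 2) {zm}) = m" using m2 by simp
  then show "hcomm (length (A # B # replicate (m - 2) {zm})) f" using fcomm by simp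
  show "mset (A # B # replicate (m - 2) {zm}) = mset (B # A # replicate (m - 2) {zm})" by simp
qed

lemma sm_zero_r: "sm A {zm} = A"
proof -
  have "{zm} # replicate (m-2) {zm} = replicate (m-1) {zm}"
  proof -
    have "m - 1 = Suc (m-2)" using m2 by simp
    then show ?thesis by simp
  qed
  then show ?thesis unfolding sm_def using F_zeros by simp
qed

lemma sm_zero_l: "sm {zm} B = B"
proof -
  have "sm {zm} B = sm B {zm}" by (rule sm_comm)
  then show ?thesis using sm_zero_r by simp
qed

lemma la2_sub_rep: "list_all2 (\<subseteq>) (replicate k A) (replicate k A)"
  by (induction k) auto

lemma sm_mono: "A \<subseteq> A' \<Longrightarrow> B \<subseteq> B' \<Longrightarrow> sm A B \<subseteq> sm A' B'"
  unfolding sm_def by (rule hext_mono) (simp add: la2_sub_rep)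

lemma sm_assoc: "sm (sm A B) C = sm A (sm B C)"
proof -
  obtain k where mk: "m = Suc (Suc k)" using m_form by blast
  define Ws where "Ws = A # B # replicate k {zm} @ C # replicate k {zm}"
  have len: "length Ws = 2*m - 1" unfolding Ws_def mk by simp
  have i0: "0 < m" "1 < m" using mk by auto
  have a1: "take 0 Ws = []" "take m (drop 0 Ws) = A # B # replicate k {zm}" "drop (0+m) Ws = C # replicate k {zm}"
    unfolding Ws_def mk by simp_all
  have a2: "take 1 Ws = [A]" "take m (drop 1 Ws) = B # replicate k {zm} @ [C]" "drop (1+m) Ws = replicate k {zm}"
    unfolding Ws_def mk by simp_all
  have "hext f (take 0 Ws @ [hext f (take m (drop 0 Ws))] @ drop (0+m) Ws) =
        hext f (take 1 Ws @ [hext f (take m (drop 1 Ws))] @ drop (1+m) Ws)"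
    by (rule hext_assoc[OF fassoc len i0])
  then have E: "hext f (hext f (A # B # replicate k {zm}) # C # replicate k {zm}) =
        hext f (A # hext f (B # replicate k {zm} @ [C]) # replicate k {zm})"
    unfolding a1 a2 by simp
  have P: "hext f (B # replicate k {zm} @ [C]) = hext f (B # C # replicate k {zm})"
  proof (rule hext_perm)
    show "hcomm (length (B # replicate k {zm} @ [C])) f" using fcomm mk by simp
    show "mset (B # replicate k {zm} @ [C]) = mset (B # C # replicate k {zm})" by simp
  qed
  have mk2: "m - 2 = k" using mk by simp
  show ?thesis unfolding sm_def mk2 using E unfolding P .
qed

lemma sum_closed_gen:
  assumes KK: "sm K K \<subseteq> K"
  shows "Cs \<noteq> [] \<Longrightarrow> length Cs \<le> m \<Longrightarrow> \<forall>C\<in>set Cs. C \<subseteq> K \<Longrightarrow> hext f (Cs @ replicate (m - length Cs) {zm}) \<subseteq> K"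
proof (induction Cs)
  case Nil
  then show ?case by simp
next
  case (Cons C Cs')
  show ?case
  proof (cases "Cs' = []")
    case True
    then show ?thesis using F_zeros Cons.prems by simp
  next
    case False
    obtain k where mk: "m = Suc (Suc k)" using m_form by blast
    define l where "l = length Cs'"
    have l1: "1 \<le> l" "l \<le> m - 1" using False Cons.prems unfolding l_def by (auto simp: Suc_le_eq)
    define Ws where "Ws = C # Cs' @ replicate (2*m - 2 - l) {zm}"
    have lC: "length Cs' = l" unfolding l_def ..
    have len: "length Ws = 2*m - 1" unfolding Ws_def using lC l1 mk by simp
    have i0: "0 < m" "1 < m" using mk by auto
    have a1: "take 0 Ws = []" "take m (drop 0 Ws) = C # Cs' @ replicate (m - 1 - l) {zm}"
        "drop (0+m) Ws = replicate (m-1) {zm}"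
      unfolding Ws_def using l1 mk by (simp_all add: lC min_def)
    have a2: "take 1 Ws = [C]" "take m (drop 1 Ws) = Cs' @ replicate (m - l) {zm}" "drop (1+m) Ws = replicate (m-2) {zm}"
      unfolding Ws_def using l1 mk by (simp_all add: lC min_def)
    have "hext f (take 0 Ws @ [hext f (take m (drop 0 Ws))] @ drop (0+m) Ws) =
          hext f (take 1 Ws @ [hext f (take m (drop 1 Ws))] @ drop (1+m) Ws)"
      by (rule hext_assoc[OF fassoc len i0])
    then have E: "hext f (C # Cs' @ replicate (m - 1 - l) {zm}) = sm C (hext f (Cs' @ replicate (m - l) {zm}))"
      unfolding a1 a2 sm_def using F_zeros by simp
    have IH: "hext f (Cs' @ replicate (m - l) {zm}) \<subseteq> K"
      using Cons.IH False Cons.prems unfolding l_def by simp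
    have "C \<subseteq> K" using Cons.prems by simp
    then have "sm C (hext f (Cs' @ replicate (m - l) {zm})) \<subseteq> K"
      using sm_mono[OF _ IH] KK by blast
    then show ?thesis using E unfolding l_def by simp
  qed
qed

lemma Fcl_of_sm: assumes KK: "sm K K \<subseteq> K" shows "Fcl K"
  unfolding Fcl_def
proof (intro allI impI)
  fix xs assume h: "length xs = m \<and> set xs \<subseteq> K"
  have "hext f (sgl xs @ replicate (m - length (sgl xs)) {zm}) \<subseteq> K"
  proof (rule sum_closed_gen[OF KK])
    show "sgl xs \<noteq> []" using h m2 unfolding sgl_def by auto
    show "length (sgl xs) \<le> m" using h unfolding sgl_def by simp
    show "\<forall>C\<in>set (sgl xs). C \<subseteq> K" using h unfolding sgl_def by auto
  qed
  then show "f xs \<subseteq> K" using h hext_sgl[of f xs] unfolding sgl_def by simp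
qed

lemma sm_of_Fcl: "Fcl K \<Longrightarrow> zm \<in> K \<Longrightarrow> sm K K \<subseteq> K"
  unfolding sm_def by (rule hext_Fcl) (use m2 in auto)

lemma sm_sum_closed:
  assumes QQ: "sm Q Q \<subseteq> Q" and XX: "sm X X \<subseteq> X"
  shows "sm (sm Q X) (sm Q X) \<subseteq> sm Q X"
proof -
  have "sm X (sm Q X) = sm (sm X Q) X" using sm_assoc by simp
  also have "\<dots> = sm (sm Q X) X" using sm_comm by simp
  also have "\<dots> = sm Q (sm X X)" using sm_assoc by simp
  also have "\<dots> \<subseteq> sm Q X" using sm_mono[OF _ XX] by blast
  finally have 1: "sm X (sm Q X) \<subseteq> sm Q X" .
  have "sm (sm Q X) (sm Q X) = sm Q (sm X (sm Q X))" using sm_assoc by simp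
  also have "\<dots> \<subseteq> sm Q (sm Q X)" using sm_mono[OF _ 1] by blast
  also have "\<dots> = sm (sm Q Q) X" using sm_assoc by simp
  also have "\<dots> \<subseteq> sm Q X" using sm_mono[OF QQ] by blast
  finally show ?thesis .
qed

end

context HM
begin

definition m1 :: 'r where "m1 = hinv m f' z one"

lemma m1_prop: "z \<in> f' (one # m1 # replicate (m-2) z)"
  unfolding m1_def by (rule hinv_prop[OF CR])

lemma Rdist_act: "length ss = m \<Longrightarrow> (\<Union>s\<in>f' ss. act s x) = hext f (map (\<lambda>s. act s x) ss)"
  using Rdist[of ones ss 0 x] n2 unfolding act_def by simp

lemma Mdist_act: "length xs = m \<Longrightarrow> (\<Union>y\<in>f xs. act r y) = hext f (map (act r) xs)"
proof -
  assume l: "length xs = m"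
  have "length (r # ones) = n - 1" using n2 by simp
  from Mdist[OF this l] show ?thesis unfolding act_def[abs_def] by simp
qed

lemma neg_in: "hinv m f zm x \<in> act m1 x"
proof -
  define ss where "ss = one # m1 # replicate (m-2) z"
  have ls: "length ss = m" unfolding ss_def using m2 by simp
  have "map (\<lambda>s. act s x) ss = {x} # act m1 x # replicate (m-2) {zm}"
    unfolding ss_def by (simp add: act_one act_z)
  then have E: "(\<Union>s\<in>f' ss. act s x) = hext f ({x} # act m1 x # replicate (m-2) {zm})"
    using Rdist_act[OF ls] by simp
  have "zm \<in> (\<Union>s\<in>f' ss. act s x)" using m1_prop act_z unfolding ss_def by blast
  then have "zm \<in> hext f ({x} # act m1 x # replicate (m-2) {zm})" using E by simp
  then obtain ws where ws: "list_all2 (\<lambda>x A. x \<in> A) ws ({x} # act m1 x # replicate (m-2) {zm})" "zm \<in> f ws"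
    unfolding hext_mem by blast
  then obtain w where "ws = x # w # replicate (m-2) zm" "w \<in> act m1 x"
    by (auto simp: list_all2_Cons2 la2_rep)
  then show ?thesis using hinv_eq[OF CM] ws(2) by simp
qed

lemma sub_mod:
  assumes ne: "K \<noteq> {}" and cl: "Fcl K" and ac: "\<And>t x. x \<in> K \<Longrightarrow> act t x \<subseteq> K"
  shows "subhypermodule m n f g K"
  unfolding subhypermodule_def
proof
  show "subhypergroup m f K"
  proof (rule canon_sub[OF CM ne])
    show "\<And>xs. length xs = m \<Longrightarrow> set xs \<subseteq> K \<Longrightarrow> f xs \<subseteq> K" using cl unfolding Fcl_def by blast
    show "\<And>x. x \<in> K \<Longrightarrow> hinv m f zm x \<in> K" using neg_in ac by blast
  qed
  show "gext g (replicate (n - 1) UNIV) K \<subseteq> K"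
  proof
    fix y assume "y \<in> gext g (replicate (n - 1) UNIV) K"
    then obtain rs x where h: "list_all2 (\<lambda>r I. r \<in> I) rs (replicate (n - 1) UNIV)" "x \<in> K" "y \<in> g rs x"
      unfolding gext_def by blast
    have "length rs = n - 1" using h(1) list_all2_lengthD by fastforce
    then have "y \<in> act (g' (rs @ [one])) x" using h(3) g_act by simp
    then show "y \<in> K" using ac h(2) by blast
  qed
qed

lemma sub_props:
  assumes "subhypermodule m n f g Q"
  shows "Fcl Q" "\<And>t x. x \<in> Q \<Longrightarrow> act t x \<subseteq> Q" "zm \<in> Q"
proof -
  have sg: "subhypergroup m f Q" and gx: "gext g (replicate (n-1) UNIV) Q \<subseteq> Q"
    using assms unfolding subhypermodule_def by auto
  show "Fcl Q" using sg unfolding subhypergroup_def Fcl_def by blast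
  show ac: "act t x \<subseteq> Q" if "x \<in> Q" for t x
  proof
    fix y assume "y \<in> act t x"
    moreover have "list_all2 (\<lambda>r I. r \<in> I) (t # ones) (replicate (n - 1) UNIV)"
      using n2 by (simp add: list_all2_conv_all_nth)
    ultimately have "y \<in> gext g (replicate (n-1) UNIV) Q" unfolding gext_def act_def using that by blast
    then show "y \<in> Q" using gx by blast
  qed
  obtain x where "x \<in> Q" using sg unfolding subhypergroup_def by blast
  then show "zm \<in> Q" using ac[of x z] act_z by blast
qed

lemma Fcl_Rset: "Fcl (Rset {y})"
  unfolding Fcl_def
proof (intro allI impI)
  fix ws assume h: "length ws = m \<and> set ws \<subseteq> Rset {y}"
  define ts where "ts = map (\<lambda>w. SOME t. w \<in> act t y) ws"
  have "\<forall>w\<in>set ws. \<exists>t. w \<in> act t y" using h unfolding Rset_def by blast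
  then have "list_all2 (\<lambda>x A. x \<in> A) ws (map (\<lambda>s. act s y) ts)"
    unfolding ts_def by (auto simp: list_all2_conv_all_nth intro: someI_ex)
  then have "f ws \<subseteq> hext f (map (\<lambda>s. act s y) ts)" unfolding hext_def by blast
  also have "\<dots> = (\<Union>s\<in>f' ts. act s y)" using Rdist_act[of ts y] h unfolding ts_def by simp
  also have "\<dots> \<subseteq> Rset {y}" unfolding Rset_def by blast
  finally show "f ws \<subseteq> Rset {y}" .
qed

lemma hext_act_sub:
  assumes l: "length As = m"
  shows "hext f (map (actS r) As) \<subseteq> actS r (hext f As)"
proof
  fix y assume "y \<in> hext f (map (actS r) As)"
  then obtain ws where ws: "list_all2 (\<lambda>x A. x \<in> A) ws (map (actS r) As)" "y \<in> f ws"
    unfolding hext_mem by blast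
  have lw: "length ws = m" using ws(1) l list_all2_lengthD by fastforce
  have ex: "\<forall>j<m. \<exists>x. x \<in> As ! j \<and> ws ! j \<in> act r x"
    using ws(1) l unfolding list_all2_conv_all_nth actS_def by fastforce
  define xs where "xs = map (\<lambda>j. SOME x. x \<in> As ! j \<and> ws ! j \<in> act r x) [0..<m]"
  have xsP: "\<forall>j<m. xs ! j \<in> As ! j \<and> ws ! j \<in> act r (xs ! j)"
  proof (intro allI impI)
    fix j assume j: "j < m"
    then have "\<exists>x. x \<in> As ! j \<and> ws ! j \<in> act r x" using ex by blast
    then have "(SOME x. x \<in> As ! j \<and> ws ! j \<in> act r x) \<in> As ! j \<and> ws ! j \<in> act r (SOME x. x \<in> As ! j \<and> ws ! j \<in> act r x)"
      by (rule someI_ex)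
    then show "xs ! j \<in> As ! j \<and> ws ! j \<in> act r (xs ! j)" unfolding xs_def using j by simp
  qed
  have lx: "length xs = m" unfolding xs_def by simp
  have "list_all2 (\<lambda>x A. x \<in> A) ws (map (act r) xs)"
    using xsP lw lx by (auto simp: list_all2_conv_all_nth)
  then have "y \<in> hext f (map (act r) xs)" using ws(2) unfolding hext_mem by blast
  then have "y \<in> (\<Union>v\<in>f xs. act r v)" using Mdist_act[OF lx] by simp
  then obtain v where v: "v \<in> f xs" "y \<in> act r v" by blast
  have "list_all2 (\<lambda>x A. x \<in> A) xs As" using xsP lx l by (auto simp: list_all2_conv_all_nth)
  then have "v \<in> hext f As" using v(1) unfolding hext_mem by blast
  then show "y \<in> actS r (hext f As)" using v(2) unfolding actS_def by blast
qed

lemma sm_act: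
  assumes A: "\<And>x. x \<in> A \<Longrightarrow> act t x \<subseteq> A" and B: "\<And>x. x \<in> B \<Longrightarrow> act t x \<subseteq> B"
    and y: "y \<in> sm A B"
  shows "act t y \<subseteq> sm A B"
proof -
  obtain ws where ws: "list_all2 (\<lambda>x A. x \<in> A) ws (A # B # replicate (m-2) {zm})" "y \<in> f ws"
    using y unfolding sm_def hext_mem by blast
  then obtain a b where ab: "ws = a # b # replicate (m-2) zm" "a \<in> A" "b \<in> B"
    by (auto simp: list_all2_Cons2 la2_rep)
  have lw: "length ws = m" using ab m2 by simp
  have "act t y \<subseteq> (\<Union>v\<in>f ws. act t v)" using ws(2) by blast
  also have "\<dots> = hext f (map (act t) ws)" using Mdist_act[OF lw] by simp
  also have "map (act t) ws = act t a # act t b # replicate (m-2) {zm}" using ab by (simp add: act_zm)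
  also have "hext f \<dots> \<subseteq> sm A B" unfolding sm_def
    by (rule hext_mono) (use A B ab in \<open>simp add: la2_sub_rep\<close>)
  finally show ?thesis .
qed

end

context HM
begin

definition Iset :: "'r \<Rightarrow> 'r set" where "Iset r = {u. \<forall>y. act u y \<subseteq> actS r (Rset {y})}"

lemma r_in_Iset: "r \<in> Iset r"
  unfolding Iset_def actS_def using Rset_incl by blast

lemma actS_I: "u \<in> Iset r \<Longrightarrow> actS u W \<subseteq> actS r (Rset W)"
proof
  fix y assume u: "u \<in> Iset r" and "y \<in> actS u W"
  then obtain w where w: "w \<in> W" "y \<in> act u w" unfolding actS_def by blast
  then have "y \<in> actS r (Rset {w})" using u unfolding Iset_def by blast
  moreover have "Rset {w} \<subseteq> Rset W" using w(1) by (intro Rset_mono) simp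
  ultimately show "y \<in> actS r (Rset W)" using actS_mono by blast
qed

lemma mul_one: "mul u one = u"
  unfolding mul_def using ident'[of u] ones_one by simp

lemma mul_z: "mul u z = z"
  unfolding mul_def using zero'[of "u # ones" "n-1"] n2
  by (simp add: take_ones1 drop_ones1)

lemma hinv_R: "hinv m f' z u = mul u m1"
proof (rule hinv_eq[OF CR])
  define ss where "ss = one # m1 # replicate (m-2) z"
  have ls: "length ss = m" unfolding ss_def using m2 by simp
  have lx: "length (u # ones) = n - 1" using n2 by simp
  have fx: "(\<lambda>y. g' (take (n-1) (u # ones) @ [y] @ drop (n-1) (u # ones))) = mul u"
    unfolding mul_def using lx by (auto simp del: len_ones)
  have "mul u ` f' ss = f' (map (mul u) ss)"
    using distr'[OF lx ls, of "n-1"] unfolding fx by simp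
  moreover have "map (mul u) ss = u # mul u m1 # replicate (m-2) z"
    unfolding ss_def by (simp add: mul_one mul_z)
  moreover have "z \<in> mul u ` f' ss"
    by (rule image_eqI[of z "mul u" z]) (simp_all add: mul_z m1_prop ss_def)
  ultimately show "z \<in> f' (u # mul u m1 # replicate (m-2) z)" by simp
qed

lemma act_g'_snoc: "length xs = n - 1 \<Longrightarrow> act (g' (xs @ [u])) y = (\<Union>w\<in>act u y. g xs w)"
proof -
  assume lx: "length xs = n - 1"
  define RS where "RS = xs @ (u # ones)"
  have len: "length RS = 2*n - 2" unfolding RS_def using n2 lx by simp
  have n1: "0 < n - 1" using n2 by simp
  have e1: "take n (drop 0 RS) = xs @ [u]" unfolding RS_def using lx n2
    by (simp add: take_append)
  have e2: "drop (0+n) RS = ones" unfolding RS_def using lx n2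
    by (simp add: drop_append)
  have e3: "drop (n-1) RS = u # ones" "take (n-1) RS = xs" unfolding RS_def using lx by simp_all
  show ?thesis using Massoc[OF len n1, of y] unfolding e1 e2 e3
    by (simp add: act_def)
qed

lemma Iset_ideal: "hyperideal m n f' g' (Iset r)"
  unfolding hyperideal_def
proof
  have cl: "f' us \<subseteq> Iset r" if lu: "length us = m" and su: "set us \<subseteq> Iset r" for us
  proof
    fix u assume u: "u \<in> f' us"
    show "u \<in> Iset r" unfolding Iset_def
    proof (intro CollectI allI)
      fix y
      have "act u y \<subseteq> (\<Union>s\<in>f' us. act s y)" using u by blast
      also have "\<dots> = hext f (map (\<lambda>s. act s y) us)" by (rule Rdist_act[OF lu])
      also have "\<dots> \<subseteq> hext f (replicate m (actS r (Rset {y})))"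
      proof (rule hext_mono)
        show "list_all2 (\<subseteq>) (map (\<lambda>s. act s y) us) (replicate m (actS r (Rset {y})))"
          using su lu unfolding Iset_def by (auto simp: list_all2_conv_all_nth dest!: nth_mem)
      qed
      also have "\<dots> = hext f (map (actS r) (replicate m (Rset {y})))" by simp
      also have "\<dots> \<subseteq> actS r (hext f (replicate m (Rset {y})))" by (rule hext_act_sub) simp
      also have "\<dots> \<subseteq> actS r (Rset {y})"
        by (rule actS_mono, rule hext_Fcl[OF Fcl_Rset]) auto
      finally show "act u y \<subseteq> actS r (Rset {y})" .
    qed
  qed
  show "subhypergroup m f' (Iset r)"
  proof (rule canon_sub[OF CR])
    show "Iset r \<noteq> {}" using r_in_Iset by blast
    show "\<And>xs. length xs = m \<Longrightarrow> set xs \<subseteq> Iset r \<Longrightarrow> f' xs \<subseteq> Iset r" using cl by blast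
    fix u assume u: "u \<in> Iset r"
    show "hinv m f' z u \<in> Iset r" unfolding hinv_R Iset_def
    proof (intro CollectI allI)
      fix y
      have "act (mul u m1) y = actS u (act m1 y)" by (rule act_mul)
      also have "\<dots> \<subseteq> actS u (Rset {y})" by (rule actS_mono) (simp add: act_in_Rset)
      also have "\<dots> \<subseteq> actS r (Rset (Rset {y}))" by (rule actS_I[OF u])
      also have "\<dots> \<subseteq> actS r (Rset {y})" by (rule actS_mono[OF Rset_Rset])
      finally show "act (mul u m1) y \<subseteq> actS r (Rset {y})" .
    qed
  qed
  show "\<forall>(xs::'r list) i. length xs = n - 1 \<and> i \<le> n - 1 \<longrightarrow> (\<lambda>y. g' (take i xs @ [y] @ drop i xs)) ` Iset r \<subseteq> Iset r"
  proof (intro allI impI)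
    fix xs :: "'r list" and i assume h: "length xs = n - 1 \<and> i \<le> n - 1"
    show "(\<lambda>y. g' (take i xs @ [y] @ drop i xs)) ` Iset r \<subseteq> Iset r"
    proof
      fix v assume "v \<in> (\<lambda>y. g' (take i xs @ [y] @ drop i xs)) ` Iset r"
      then obtain u where u: "u \<in> Iset r" "v = g' (take i xs @ [u] @ drop i xs)" by blast
      have H: "\<forall>xs ys. length xs = n \<and> mset xs = mset ys \<longrightarrow> g' xs = g' ys" using gcomm unfolding hcomm_def .
      have a1: "length (take i xs @ [u] @ drop i xs) = n" using h n2 by auto
      have "mset (take i xs @ [u] @ drop i xs) = mset (take i xs @ drop i xs) + {#u#}"
        by (simp only: mset_append) simp
      then have a2: "mset (take i xs @ [u] @ drop i xs) = mset (xs @ [u])" by simp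
      have v: "v = g' (xs @ [u])" using H a1 a2 u(2) by blast
      define c where "c = g' (xs @ [one])"
      show "v \<in> Iset r" unfolding Iset_def
      proof (intro CollectI allI)
        fix y
        have "act v y = (\<Union>w\<in>act u y. g xs w)" unfolding v using act_g'_snoc h by simp
        also have "\<dots> = actS c (act u y)" unfolding actS_def c_def using g_act h by simp
        also have "\<dots> \<subseteq> actS c (actS r (Rset {y}))" using u(1) unfolding Iset_def by (intro actS_mono) blast
        also have "\<dots> = actS r (actS c (Rset {y}))" by (rule actS_comm)
        also have "\<dots> \<subseteq> actS r (Rset (Rset {y}))" by (intro actS_mono actS_in_Rset)
        also have "\<dots> \<subseteq> actS r (Rset {y})" by (rule actS_mono[OF Rset_Rset])
        finally show "act v y \<subseteq> actS r (Rset {y})" .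
      qed
    qed
  qed
qed

lemma prod_incl: "list_all2 (\<lambda>u r. u \<in> Iset r) us rs \<Longrightarrow> foldr actS us X \<subseteq> foldr actS rs (Rset X)"
proof (induction rule: list_all2_induct)
  case Nil
  then show ?case by (simp add: Rset_incl)
next
  case (Cons u us r rs)
  have "foldr actS (u # us) X = actS u (foldr actS us X)" by simp
  also have "\<dots> \<subseteq> actS u (foldr actS rs (Rset X))" by (rule actS_mono[OF Cons.IH])
  also have "\<dots> \<subseteq> actS r (Rset (foldr actS rs (Rset X)))" by (rule actS_I[OF Cons.hyps(1)])
  also have "Rset (foldr actS rs (Rset X)) = foldr actS rs (Rset (Rset X))" by (rule Rset_foldr[symmetric])
  also have "actS r \<dots> \<subseteq> actS r (foldr actS rs (Rset X))" by (intro actS_mono foldr_mono Rset_Rset)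
  finally show ?case by simp
qed

end

context HM
begin

lemma main_loc:
  fixes Q S :: "'a set"
  assumes Qsub: "subhypermodule m n f g Q" and Qprop: "Q \<noteq> UNIV"
    and Scond: "\<forall>Is N1 N2. length Is = n - 1 \<and> (\<forall>I\<in>set Is. hyperideal m n f' g' I) \<and>
        subhypermodule m n f g N1 \<and> subhypermodule m n f g N2 \<and>
        (\<forall>i < n - 1. hext f ([N1, gext g (Is ! i # replicate (n-2) {one}) N2] @ replicate (m-2) {zm}) \<inter> S \<noteq> {})
        \<longrightarrow> hext f ([N1, gext g Is N2] @ replicate (m-2) {zm}) \<inter> S \<noteq> {}"
    and Qdisj: "Q \<inter> S = {}"
    and Qmax: "\<forall>N. subhypermodule m n f g N \<and> Q \<subseteq> N \<and> N \<inter> S = {} \<longrightarrow> N = Q"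
  shows "classical_prime m n f g one Q"
  unfolding classical_prime_def
proof (intro conjI allI impI)
  show "subhypermodule m n f g Q" by (rule Qsub)
  show "Q \<noteq> UNIV" by (rule Qprop)
  have QF: "Fcl Q" and Qa: "\<And>t x. x \<in> Q \<Longrightarrow> act t x \<subseteq> Q" and Qz: "zm \<in> Q"
    using sub_props[OF Qsub] by auto
  have QQ: "sm Q Q \<subseteq> Q" by (rule sm_of_Fcl[OF QF Qz])
  fix rs a assume h: "length rs = n - 1 \<and> g rs a \<subseteq> Q"
  show "\<exists>i<n - 1. g (rs ! i # replicate (n - 2) one) a \<subseteq> Q"
  proof (rule ccontr)
    assume "\<not> (\<exists>i<n - 1. g (rs ! i # replicate (n - 2) one) a \<subseteq> Q)"
    note nex = this
    have nq: "\<not> act (rs ! i) a \<subseteq> Q" if i: "i < n - 1" for i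
    proof
      assume "act (rs ! i) a \<subseteq> Q"
      moreover have "act (rs ! i) a = g (rs ! i # replicate (n - 2) one) a" by (simp add: act_def ones_def)
      ultimately have "g (rs ! i # replicate (n - 2) one) a \<subseteq> Q" by simp
      then show False using nex i by blast
    qed
    define N2 where "N2 = Rset {a}"
    define Is where "Is = map Iset rs"
    have aN: "a \<in> N2" unfolding N2_def using Rset_incl by blast
    have N2F: "Fcl N2" unfolding N2_def by (rule Fcl_Rset)
    have N2a: "act t x \<subseteq> N2" if "x \<in> N2" for t x
    proof -
      have "act t x \<subseteq> Rset N2" by (rule act_in_Rset[OF that])
      also have "Rset N2 \<subseteq> N2" unfolding N2_def by (rule Rset_Rset)
      finally show ?thesis .
    qed
    have "act z a \<subseteq> N2" unfolding N2_def by (rule act_in_Rset) simp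
    then have N2z: "zm \<in> N2" using act_z[of a] by simp
    have N2sub: "subhypermodule m n f g N2" using sub_mod[OF _ N2F N2a] aN by blast
    have condi: "hext f ([Q, gext g (Is ! i # replicate (n-2) {one}) N2] @ replicate (m-2) {zm}) \<inter> S \<noteq> {}"
      if i: "i < n - 1" for i
    proof -
      define r where "r = rs ! i"
      define X where "X = actS r N2"
      have Xz: "zm \<in> X" unfolding X_def actS_def using N2z act_zm by blast
      have XF: "Fcl X" unfolding Fcl_def
      proof (intro allI impI)
        fix xs assume hx: "length xs = m \<and> set xs \<subseteq> X"
        have "f xs = hext f (sgl xs)" by (simp add: hext_sgl)
        also have "\<dots> \<subseteq> hext f (replicate m X)"
          by (rule hext_mono) (use hx in \<open>auto simp: sgl_def list_all2_conv_all_nth dest!: nth_mem\<close>)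
        also have "\<dots> = hext f (map (actS r) (replicate m N2))" unfolding X_def by simp
        also have "\<dots> \<subseteq> actS r (hext f (replicate m N2))" by (rule hext_act_sub) simp
        also have "\<dots> \<subseteq> X" unfolding X_def by (rule actS_mono, rule hext_Fcl[OF N2F]) auto
        finally show "f xs \<subseteq> X" .
      qed
      have XX: "sm X X \<subseteq> X" by (rule sm_of_Fcl[OF XF Xz])
      have Xa: "act t x \<subseteq> X" if xX: "x \<in> X" for t x
      proof -
        obtain v where v: "v \<in> N2" "x \<in> act r v" using xX unfolding X_def actS_def by blast
        have "act t x \<subseteq> actS t (act r v)" using v unfolding actS_def by blast
        also have "\<dots> = actS r (act t v)" by (rule act_comm)
        also have "\<dots> \<subseteq> X" unfolding X_def using N2a[OF v(1)] by (rule actS_mono)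
        finally show ?thesis .
      qed
      define P where "P = sm Q X"
      have QP: "Q \<subseteq> P" unfolding P_def using sm_mono[of Q Q "{zm}" X] Xz sm_zero_r by auto
      have XP: "X \<subseteq> P" unfolding P_def using sm_mono[of "{zm}" Q X X] Qz sm_zero_l by auto
      have PF: "Fcl P" unfolding P_def by (rule Fcl_of_sm[OF sm_sum_closed[OF QQ XX]])
      have Pa: "act t x \<subseteq> P" if "x \<in> P" for t x
        unfolding P_def by (rule sm_act) (use Qa Xa that P_def in auto)
      have Psub: "subhypermodule m n f g P" using sub_mod[OF _ PF Pa] QP Qz by blast
      have "act r a \<subseteq> X" unfolding X_def actS_def using aN by blast
      then have "\<not> P \<subseteq> Q" using XP nq[OF i] unfolding r_def by blast
      then have "P \<noteq> Q" by blast
      have PS: "P \<inter> S \<noteq> {}"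
      proof
        assume "P \<inter> S = {}"
        then have "P = Q" using Qmax[rule_format, of P] Psub QP by simp
        then show False using \<open>P \<noteq> Q\<close> by contradiction
      qed
      have XG: "X \<subseteq> gext g (Is ! i # replicate (n-2) {one}) N2"
      proof
        fix y assume "y \<in> X"
        then obtain v where v: "v \<in> N2" "y \<in> act r v" unfolding X_def actS_def by blast
        have "Is ! i = Iset r" unfolding Is_def r_def using i h by simp
        then have "list_all2 (\<lambda>r I. r \<in> I) (r # ones) (Is ! i # replicate (n-2) {one})"
          using r_in_Iset by (simp add: ones_def la2_rep)
        then show "y \<in> gext g (Is ! i # replicate (n-2) {one}) N2"
          unfolding gext_def using v unfolding act_def by blast
      qed
      have "P \<subseteq> hext f ([Q, gext g (Is ! i # replicate (n-2) {one}) N2] @ replicate (m-2) {zm})"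
        unfolding P_def sm_def using sm_mono[OF _ XG, of Q Q] unfolding sm_def by simp
      then show ?thesis using PS by blast
    qed
    have Iid: "\<forall>I\<in>set Is. hyperideal m n f' g' I" unfolding Is_def using Iset_ideal by auto
    have lIs: "length Is = n - 1" unfolding Is_def using h by simp
    have prem: "length Is = n - 1 \<and> (\<forall>I\<in>set Is. hyperideal m n f' g' I) \<and>
        subhypermodule m n f g Q \<and> subhypermodule m n f g N2 \<and>
        (\<forall>i < n - 1. hext f ([Q, gext g (Is ! i # replicate (n-2) {one}) N2] @ replicate (m-2) {zm}) \<inter> S \<noteq> {})"
      using lIs Iid Qsub N2sub condi by simp
    have "hext f ([Q, gext g Is N2] @ replicate (m-2) {zm}) \<inter> S \<noteq> {}"
      using Scond[rule_format, of Is Q N2, OF prem] .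
    moreover have "gext g Is N2 \<subseteq> Q"
    proof
      fix y assume "y \<in> gext g Is N2"
      then obtain us x where ux: "list_all2 (\<lambda>r I. r \<in> I) us Is" "x \<in> N2" "y \<in> g us x"
        unfolding gext_def by blast
      have lu: "length us = n - 1" using ux(1) lIs list_all2_lengthD by fastforce
      have la: "list_all2 (\<lambda>u r. u \<in> Iset r) us rs" using ux(1) unfolding Is_def
        by (simp add: list_all2_map2)
      have "g us x = foldr actS us {x}" by (rule g_fold[OF lu])
      also have "\<dots> \<subseteq> foldr actS rs (Rset {x})" by (rule prod_incl[OF la])
      also have "\<dots> \<subseteq> foldr actS rs N2"
      proof (rule foldr_mono)
        have "Rset {x} \<subseteq> Rset N2" using ux(2) by (intro Rset_mono) simp
        then show "Rset {x} \<subseteq> N2" using Rset_Rset unfolding N2_def by blast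
      qed
      also have "\<dots> = Rset (foldr actS rs {a})" unfolding N2_def by (rule Rset_foldr)
      also have "foldr actS rs {a} = g rs a" using g_fold[of rs a] h by simp
      also have "Rset (g rs a) \<subseteq> Q" using h Qa unfolding Rset_def by blast
      finally show "y \<in> Q" using ux(3) by blast
    qed
    then have "hext f ([Q, gext g Is N2] @ replicate (m-2) {zm}) \<subseteq> Q"
      using QQ sm_mono[of Q Q "gext g Is N2" Q] unfolding sm_def by auto
    ultimately show False using Qdisj by blast
  qed
qed

end

theorem mainTheorem2:
  fixes f' :: "'r list \<Rightarrow> 'r set" and g' :: "'r list \<Rightarrow> 'r" and z one :: 'r
    and f :: "'a list \<Rightarrow> 'a set" and g :: "'r list \<Rightarrow> 'a \<Rightarrow> 'a set" and zm :: 'a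
    and m n :: nat and Q S :: "'a set"
  assumes hm: "hypermodule m n f' g' z one f g zm"
    and Qsub: "subhypermodule m n f g Q" and Qprop: "Q \<noteq> UNIV"
    and Sne: "S \<noteq> {}" and Ssub: "S \<subseteq> UNIV - {zm}"
    and Scond: "\<forall>Is N1 N2. length Is = n - 1 \<and> (\<forall>I\<in>set Is. hyperideal m n f' g' I) \<and>
        subhypermodule m n f g N1 \<and> subhypermodule m n f g N2 \<and>
        (\<forall>i < n - 1. hext f ([N1, gext g (Is ! i # replicate (n-2) {one}) N2] @ replicate (m-2) {zm}) \<inter> S \<noteq> {})
        \<longrightarrow> hext f ([N1, gext g Is N2] @ replicate (m-2) {zm}) \<inter> S \<noteq> {}"
    and Qdisj: "Q \<inter> S = {}"
    and Qmax: "\<forall>N. subhypermodule m n f g N \<and> Q \<subseteq> N \<and> N \<inter> S = {} \<longrightarrow> N = Q"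
  shows "classical_prime m n f g one Q"
proof -
  interpret HM m n f' g' z one f g zm by (rule HM.intro[OF hm])
  show ?thesis by (rule main_loc[OF Qsub Qprop Scond Qdisj Qmax])
qed

end
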